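(* Let $G$ be a graph containing no cycle of length 6, let $x\in V(G)$, and let $A$ be a bipartite connected component of $G[N_2(x)]$ with vertex sets of bipartition $V_1$ and $V_2$. Then for each $i\in\{1,2\}$, if $|V_i|\ge 2$ then $|N(x)\cap N(V_i)|=1$.
   Context: All graphs are finite, simple and undirected; "containing no cycle of length 6" means having no subgraph (not necessarily induced) isomorphic to $C_6$. $N_i(S)$ denotes the set of vertices at distance exactly $i$ from the vertex set $S$, $N(S)=N_1(S)$, $N(v)=N(\{v\})$, $N_2(v)=N_2(\{v\})$. *)

theory Defs
  imports Main
begin

definition simple_graph :: "'a set \<Rightarrow> ('a \<Rightarrow> 'a \<Rightarrow> bool) \<Rightarrow> bool" where
  "simple_graph V E \<longleftrightarrow> finite V \<and> (\<forall>u v. E u v \<longrightarrow> u \<in> V \<and> v \<in> V)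
     \<and> (\<forall>u v. E u v \<longrightarrow> E v u) \<and> (\<forall>v. \<not> E v v)"

definition has_C6 :: "'a set \<Rightarrow> ('a \<Rightarrow> 'a \<Rightarrow> bool) \<Rightarrow> bool" where
  "has_C6 V E \<longleftrightarrow> (\<exists>xs. length xs = 6 \<and> distinct xs \<and> set xs \<subseteq> V \<and>
      (\<forall>i<6. E (xs ! i) (xs ! ((i + 1) mod 6))))"

fun within :: "'a set \<Rightarrow> ('a \<Rightarrow> 'a \<Rightarrow> bool) \<Rightarrow> nat \<Rightarrow> 'a set \<Rightarrow> 'a \<Rightarrow> bool" where
  "within V E 0 S v \<longleftrightarrow> v \<in> S \<and> v \<in> V"
| "within V E (Suc k) S v \<longleftrightarrow> within V E k S v \<or> (v \<in> V \<and> (\<exists>u. within V E k S u \<and> E u v))"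

text \<open>N_i(S): vertices at distance exactly i from S.\<close>
fun Nb :: "'a set \<Rightarrow> ('a \<Rightarrow> 'a \<Rightarrow> bool) \<Rightarrow> nat \<Rightarrow> 'a set \<Rightarrow> 'a set" where
  "Nb V E 0 S = S \<inter> V"
| "Nb V E (Suc k) S = {v \<in> V. within V E (Suc k) S v \<and> \<not> within V E k S v}"

definition connected_in :: "('a \<Rightarrow> 'a \<Rightarrow> bool) \<Rightarrow> 'a set \<Rightarrow> bool" where
  "connected_in E C \<longleftrightarrow> (\<forall>u\<in>C. \<forall>v\<in>C. (\<lambda>a b. a \<in> C \<and> b \<in> C \<and> E a b)\<^sup>*\<^sup>* u v)"

definition is_component :: "('a \<Rightarrow> 'a \<Rightarrow> bool) \<Rightarrow> 'a set \<Rightarrow> 'a set \<Rightarrow> bool" where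
  "is_component E W C \<longleftrightarrow> C \<noteq> {} \<and> C \<subseteq> W \<and> connected_in E C \<and>
     (\<forall>u\<in>C. \<forall>v\<in>W. E u v \<longrightarrow> v \<in> C)"

definition bipartition :: "('a \<Rightarrow> 'a \<Rightarrow> bool) \<Rightarrow> 'a set \<Rightarrow> 'a set \<Rightarrow> 'a set \<Rightarrow> bool" where
  "bipartition E C V1 V2 \<longleftrightarrow> V1 \<union> V2 = C \<and> V1 \<inter> V2 = {} \<and>
     (\<forall>u\<in>V1. \<forall>v\<in>V1. \<not> E u v) \<and> (\<forall>u\<in>V2. \<forall>v\<in>V2. \<not> E u v)"

end

theory Submission
  imports Defs
begin

lemma c6:
  assumes "simple_graph V E" "x \<in> V" "E x a" "E a y" "E y y'" "E y' z" "E z b" "E b x"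
    "distinct [x,a,y,y',z,b]"
  shows "has_C6 V E"
proof -
  have eV: "\<And>u v. E u v \<Longrightarrow> v \<in> V" using assms(1) unfolding simple_graph_def by blast
  have inV: "a \<in> V" "y \<in> V" "y' \<in> V" "z \<in> V" "b \<in> V"
    using eV assms(3-8) by blast+
  have "\<forall>i<6. E ([x,a,y,y',z,b] ! i) ([x,a,y,y',z,b] ! ((i + 1) mod 6))"
  proof (intro allI impI)
    fix i :: nat assume "i < 6"
    then have "i = 0 \<or> i = 1 \<or> i = 2 \<or> i = 3 \<or> i = 4 \<or> i = 5" by linarith
    then show "E ([x,a,y,y',z,b] ! i) ([x,a,y,y',z,b] ! ((i + 1) mod 6))"
      by (elim disjE) (simp_all add: assms(3-8))
  qed
  moreover have "set [x,a,y,y',z,b] \<subseteq> V" using assms(2) inV by simp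
  ultimately show ?thesis unfolding has_C6_def using assms(9)
    by (intro exI[of _ "[x,a,y,y',z,b]"]) simp
qed

lemma Nb2:
  assumes "simple_graph V E" "x \<in> V"
  shows "Nb V E 2 {x} = {v\<in>V. v \<noteq> x \<and> \<not> E x v \<and> (\<exists>u. E x u \<and> E u v)}"
proof -
  have e: "\<And>u v. E u v \<Longrightarrow> u \<in> V \<and> v \<in> V" and irr: "\<And>v. \<not> E v v"
    using assms(1) unfolding simple_graph_def by blast+
  have w1: "within V E 1 {x} v \<longleftrightarrow> v = x \<or> E x v" for v
    using assms(2) e by auto
  have w2: "within V E 2 {x} v \<longleftrightarrow> within V E 1 {x} v \<or> (v \<in> V \<and> (\<exists>u. within V E 1 {x} u \<and> E u v))" for v
    by (simp add: numeral_2_eq_2)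
  have "Nb V E 2 {x} = {v \<in> V. within V E 2 {x} v \<and> \<not> within V E 1 {x} v}"
    by (simp add: numeral_2_eq_2)
  also have "\<dots> = {v\<in>V. v \<noteq> x \<and> \<not> E x v \<and> (\<exists>u. E x u \<and> E u v)}"
    unfolding w2 w1 using irr by blast
  finally show ?thesis .
qed

lemma Nb1S:
  "Nb V E 1 S = {v\<in>V. v \<notin> S \<and> (\<exists>u\<in>S\<inter>V. E u v)}"
  by auto

lemma key:
  assumes sg: "simple_graph V E" and noc: "\<not> has_C6 V E" and xV: "x \<in> V"
    and comp: "is_component E (Nb V E 2 {x}) A"
    and bip: "bipartition E A V1 V2"
    and u0: "u0 \<in> V1" and xa: "E x a" and au0: "E a u0"
  shows "\<forall>z\<in>V1. z \<noteq> u0 \<longrightarrow> (\<forall>b. E x b \<longrightarrow> E b z \<longrightarrow> b = a)"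
proof -
  let ?N2 = "Nb V E 2 {x}"
  have N2: "?N2 = {v\<in>V. v \<noteq> x \<and> \<not> E x v \<and> (\<exists>u. E x u \<and> E u v)}" using Nb2[OF sg xV] .
  have AN2: "A \<subseteq> ?N2" using comp unfolding is_component_def by blast
  have conn: "connected_in E A" using comp unfolding is_component_def by blast
  have b1: "V1 \<union> V2 = A" "V1 \<inter> V2 = {}" "\<forall>u\<in>V1. \<forall>v\<in>V1. \<not> E u v" "\<forall>u\<in>V2. \<forall>v\<in>V2. \<not> E u v"
    using bip unfolding bipartition_def by blast+
  have sym: "\<And>u v. E u v \<Longrightarrow> E v u" and irr: "\<And>v. \<not> E v v"
    using sg unfolding simple_graph_def by blast+
  have inN2: "\<And>v. v \<in> A \<Longrightarrow> v \<noteq> x \<and> \<not> E x v \<and> (\<exists>u. E x u \<and> E u v)"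
    using AN2 N2 by blast
  have cyc: "False" if "E x c" "E c y" "E y y'" "E y' z" "E z b" "E x b" "c \<noteq> b"
    "y \<in> A" "y' \<in> A" "z \<in> A" "y \<noteq> z" for c y y' z b
  proof -
    have "distinct [x,c,y,y',z,b]"
    proof -
      have n1: "y \<noteq> x" "\<not> E x y" using inN2[OF that(8)] by auto
      have n2: "y' \<noteq> x" "\<not> E x y'" using inN2[OF that(9)] by auto
      have n3: "z \<noteq> x" "\<not> E x z" using inN2[OF that(10)] by auto
      have "x \<noteq> c" "x \<noteq> b" "c \<noteq> y" "c \<noteq> y'" "c \<noteq> z" "y \<noteq> y'" "y \<noteq> b"
        "y' \<noteq> z" "y' \<noteq> b" "z \<noteq> b"
        using that(1-6) n1 n2 n3 irr by metis+
      then show ?thesis using n1 n2 n3 that(7,11) by auto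
    qed
    then have "has_C6 V E" using c6[OF sg xV that(1-5) sym[OF that(6)]] by blast
    then show False using noc by blast
  qed
  let ?R = "\<lambda>a b. a \<in> A \<and> b \<in> A \<and> E a b"
  have u0A: "u0 \<in> A" using u0 b1 by blast
  have main: "(y \<in> V1 \<longrightarrow> y \<noteq> u0 \<longrightarrow> (\<forall>b. E x b \<longrightarrow> E b y \<longrightarrow> b = a)) \<and>
     (y \<in> V2 \<longrightarrow> (\<forall>z\<in>V1. E y z \<longrightarrow> z \<noteq> u0 \<longrightarrow> (\<forall>b. E x b \<longrightarrow> E b z \<longrightarrow> b = a)))"
    if "?R\<^sup>*\<^sup>* u0 y" for y
    using that
  proof (induction rule: rtranclp_induct)
    case base
    then show ?case using u0 b1 by blast
  next
    case (step y y')
    have yA: "y \<in> A" and y'A: "y' \<in> A" and e: "E y y'" using step by blast+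
    show ?case
    proof (cases "y' \<in> V1")
      case True
      then have "y \<in> V2" using b1 yA e by blast
      then show ?thesis using step.IH True e b1 by blast
    next
      case False
      then have y'2: "y' \<in> V2" using b1 y'A by blast
      then have y1: "y \<in> V1" using b1 yA e by blast
      have "\<forall>z\<in>V1. E y' z \<longrightarrow> z \<noteq> u0 \<longrightarrow> (\<forall>b. E x b \<longrightarrow> E b z \<longrightarrow> b = a)"
      proof (intro ballI impI allI)
        fix z b assume z: "z \<in> V1" "E y' z" "z \<noteq> u0" "E x b" "E b z"
        show "b = a"
        proof (cases "z = y")
          case True
          have "\<forall>b. E x b \<longrightarrow> E b y \<longrightarrow> b = a" using conjunct1[OF step.IH] y1 z(3) True by simp
          then show ?thesis using z True by simp
        next
          case False
          obtain c where c: "E x c" "E c y" "c = a"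
          proof (cases "y = u0")
            case True then show ?thesis using that xa au0 by blast
          next
            case False
            obtain c where c1: "E x c" "E c y" using inN2[OF yA] by blast
            have "\<forall>b. E x b \<longrightarrow> E b y \<longrightarrow> b = a" using conjunct1[OF step.IH] y1 False by simp
            then have "c = a" using c1 by simp
            then show ?thesis using that c1 by simp
          qed
          show ?thesis
          proof (rule ccontr)
            assume "b \<noteq> a"
            have zA: "z \<in> A" using z(1) b1(1) by blast
            show False by (rule cyc[of c y y' z b]) (use c e z False yA y'A zA \<open>b \<noteq> a\<close> sym in auto)
          qed
        qed
      qed
      then show ?thesis using False y'2 by blast
    qed
  qed
  show ?thesis
  proof (intro ballI impI allI)
    fix z b assume "z \<in> V1" "z \<noteq> u0" "E x b" "E b z"
    moreover have "?R\<^sup>*\<^sup>* u0 z" using conn u0A \<open>z \<in> V1\<close> b1 unfolding connected_in_def by blast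
    ultimately show "b = a" using main by blast
  qed
qed

lemma half:
  assumes sg: "simple_graph V E" and noc: "\<not> has_C6 V E" and xV: "x \<in> V"
    and comp: "is_component E (Nb V E 2 {x}) A"
    and bip: "bipartition E A V1 V2"
    and c: "card V1 \<ge> 2"
  shows "card (Nb V E 1 {x} \<inter> Nb V E 1 V1) = 1"
proof -
  have N2: "Nb V E 2 {x} = {v\<in>V. v \<noteq> x \<and> \<not> E x v \<and> (\<exists>u. E x u \<and> E u v)}" using Nb2[OF sg xV] .
  have V1N2: "V1 \<subseteq> Nb V E 2 {x}" using comp bip unfolding is_component_def bipartition_def by blast
  obtain u0 w where uw: "u0 \<in> V1" "w \<in> V1" "u0 \<noteq> w"
  proof -
    have f: "finite V1" using c by (metis card.infinite not_numeral_le_zero)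
    have "\<not> card V1 \<le> Suc 0" using c by simp
    then show ?thesis using that card_le_Suc0_iff_eq[OF f] by blast
  qed
  obtain a where a: "E x a" "E a u0" using uw V1N2 N2 by blast
  obtain c where cw: "E x c" "E c w" using uw V1N2 N2 by blast
  have k1: "\<forall>z\<in>V1. z \<noteq> u0 \<longrightarrow> (\<forall>b. E x b \<longrightarrow> E b z \<longrightarrow> b = a)"
    using key[OF sg noc xV comp bip uw(1) a] .
  have "w \<noteq> u0" using uw by blast
  then have "c = a" using k1 uw(2) cw by blast
  then have k2: "\<forall>z\<in>V1. z \<noteq> w \<longrightarrow> (\<forall>b. E x b \<longrightarrow> E b z \<longrightarrow> b = a)"
    using key[OF sg noc xV comp bip uw(2)] cw by blast
  have all: "\<forall>z\<in>V1. \<forall>b. E x b \<longrightarrow> E b z \<longrightarrow> b = a" using k1 k2 uw by metis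
  have sym: "\<And>u v. E u v \<Longrightarrow> E v u" and irr: "\<And>v. \<not> E v v"
    and inV: "\<And>u v. E u v \<Longrightarrow> u \<in> V \<and> v \<in> V"
    using sg unfolding simple_graph_def by blast+
  have "Nb V E 1 {x} \<inter> Nb V E 1 V1 = {a}"
  proof
    show "Nb V E 1 {x} \<inter> Nb V E 1 V1 \<subseteq> {a}"
    proof
      fix b assume "b \<in> Nb V E 1 {x} \<inter> Nb V E 1 V1"
      then have "E x b" "\<exists>u\<in>V1. E u b" unfolding Nb1S using xV by auto
      then show "b \<in> {a}" using all sym by blast
    qed
  next
    have "a \<notin> V1" using V1N2 N2 a by blast
    moreover have "a \<noteq> x" using a irr by blast
    ultimately show "{a} \<subseteq> Nb V E 1 {x} \<inter> Nb V E 1 V1"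
    proof -
      have "u0 \<in> V1 \<inter> V" "E u0 a" "a \<in> V" using a uw inV sym by blast+
      then show ?thesis unfolding Nb1S using \<open>a \<notin> V1\<close> \<open>a \<noteq> x\<close> a(1) xV by auto
    qed
  qed
  then show ?thesis by simp
qed

theorem lemma2p4:
  fixes V :: "'a set" and E :: "'a \<Rightarrow> 'a \<Rightarrow> bool"
  assumes "simple_graph V E"
    and "\<not> has_C6 V E"
    and "x \<in> V"
    and "is_component E (Nb V E 2 {x}) A"
    and "bipartition E A V1 V2"
  shows "(card V1 \<ge> 2 \<longrightarrow> card (Nb V E 1 {x} \<inter> Nb V E 1 V1) = 1) \<and>
         (card V2 \<ge> 2 \<longrightarrow> card (Nb V E 1 {x} \<inter> Nb V E 1 V2) = 1)"
proof -
  have "bipartition E A V2 V1" using assms(5) unfolding bipartition_def by blast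
  then show ?thesis using half[OF assms(1-5)] half[OF assms(1-4)] by blast
qed

end
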